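(* Let $A\in\mathbb{R}^{n\times d}$ have rows $a_1,\dots,a_n$ that are independent Gaussian random vectors, each with independent coordinates of variance $\sigma^2$ (arbitrary means), and let $b\in\mathbb{R}^n$ be fixed. Then for any $R>0$, \[ \Pr\Big[\max_{I\in\binom{[n]}{d}}\|x_I\|\ge R\|b\|_\infty\Big]\le\frac{2d^2n^d}{\sigma R\sqrt{2\pi}}, \] where $x_I=A_I^{-1}b_I$.
   Context: $A_I$ and $b_I$ denote the rows of $A$ and entries of $b$ indexed by $I\in\binom{[n]}{d}$; $A_I$ is almost surely invertible. *)

theory Defs
  imports "HOL-Probability.Probability" "Jordan_Normal_Form.Gauss_Jordan_Elimination"
begin

text \<open>Random matrix A: entries A(i,j), i < n (rows), j < d (columns), independent,
  A(i,j) ~ N(mu i j, sg^2).  Realised as the product measure.\<close>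
definition gauss_matrix_measure ::
  "nat \<Rightarrow> nat \<Rightarrow> (nat \<Rightarrow> nat \<Rightarrow> real) \<Rightarrow> real \<Rightarrow> (nat \<times> nat \<Rightarrow> real) measure" where
  "gauss_matrix_measure n d mu sg =
     PiM ({..<n} \<times> {..<d}) (\<lambda>(i,j). density lborel (normal_density (mu i j) sg))"

definition sub_rows :: "nat \<Rightarrow> (nat \<times> nat \<Rightarrow> real) \<Rightarrow> nat set \<Rightarrow> real mat" where
  "sub_rows d A I = mat d d (\<lambda>(k,l). A (sorted_list_of_set I ! k, l))"

definition sub_vec :: "nat \<Rightarrow> (nat \<Rightarrow> real) \<Rightarrow> nat set \<Rightarrow> real vec" where
  "sub_vec d b I = vec d (\<lambda>k. b (sorted_list_of_set I ! k))"

definition vnorm :: "real vec \<Rightarrow> real" where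
  "vnorm x = sqrt (\<Sum>k<dim_vec x. (x $ k)^2)"

definition sup_norm :: "nat \<Rightarrow> (nat \<Rightarrow> real) \<Rightarrow> real" where
  "sup_norm n b = Max ((\<lambda>i. \<bar>b i\<bar>) ` {..<n})"

end

theory Submission
  imports Defs "Jordan_Normal_Form.Determinant"
begin


lemma normal_density_le: assumes "sg > 0"
  shows "normal_density m sg x \<le> 1 / (sg * sqrt (2*pi))"
proof -
  have "exp (-(x - m)\<^sup>2/ (2 * sg\<^sup>2)) \<le> 1" by simp
  moreover have "sqrt (2 * pi * sg\<^sup>2) = sg * sqrt (2*pi)"
    using assms by (simp add: real_sqrt_mult mult.commute)
  ultimately show ?thesis unfolding normal_density_def using assms
    by (simp add: divide_right_mono)
qed

lemma normal_cball: assumes "sg > 0" "s \<ge> 0"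
  shows "emeasure (density lborel (normal_density m sg)) {c - s .. c + s} \<le> ennreal (2 * s / (sg * sqrt (2*pi)))"
proof -
  have "emeasure (density lborel (normal_density m sg)) {c - s .. c + s}
     = (\<integral>\<^sup>+ x. ennreal (normal_density m sg x) * indicator {c - s .. c + s} x \<partial>lborel)"
    by (subst emeasure_density) auto
  also have "\<dots> \<le> (\<integral>\<^sup>+ x. ennreal (1 / (sg * sqrt (2*pi))) * indicator {c - s .. c + s} x \<partial>lborel)"
    by (intro nn_integral_mono) (auto intro!: mult_right_mono ennreal_leI normal_density_le assms split: split_indicator)
  also have "\<dots> = ennreal (1 / (sg * sqrt (2*pi))) * emeasure lborel {c - s .. c + s}"
    by (subst nn_integral_cmult) auto
  also have "\<dots> = ennreal (2 * s / (sg * sqrt (2*pi)))"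
    using assms by (simp add: ennreal_mult'[symmetric])
  finally show ?thesis .
qed



lemma lemA:
  fixes N :: "'i \<Rightarrow> real measure" and G F :: "('i \<Rightarrow> real) \<Rightarrow> real"
    and h :: "('i \<Rightarrow> real) \<Rightarrow> bool"
  assumes K: "finite K" "p \<in> K" and prob: "\<And>i. prob_space (N i)"
    and Np: "N p = density lborel (normal_density mp sg)" and sg: "sg > 0" and s: "s \<ge> 0"
    and hm: "{x \<in> space (PiM K N). h x} \<in> sets (PiM K N)"
    and Gm: "G \<in> borel_measurable (PiM K N)" and Fm: "F \<in> borel_measurable (PiM K N)"
    and Gi: "\<And>x y. x \<in> space (PiM K N) \<Longrightarrow> G (x(p:=y)) = G x"
    and Fi: "\<And>x y. x \<in> space (PiM K N) \<Longrightarrow> F (x(p:=y)) = F x"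
    and hi: "\<And>x y. x \<in> space (PiM K N) \<Longrightarrow> h (x(p:=y)) = h x"
  shows "measure (PiM K N) {x \<in> space (PiM K N). h x \<and> G x \<noteq> 0 \<and> \<bar>G x * x p + F x\<bar> \<le> s * \<bar>G x\<bar>}
        \<le> 2 * s / (sg * sqrt (2*pi)) * measure (PiM K N) {x \<in> space (PiM K N). h x}"
proof -
  define M where "M = PiM K N"
  define K' where "K' = K - {p}"
  define C where "C = 2 * s / (sg * sqrt (2*pi))"
  have C0: "C \<ge> 0" unfolding C_def using sg s by auto
  have KK: "K = insert p K'" "p \<notin> K'" "finite K'" using K unfolding K'_def by auto
  interpret product_sigma_finite N
    using prob by (simp add: product_sigma_finite_def prob_space_imp_sigma_finite)
  interpret Mp: prob_space M unfolding M_def by (rule prob_space_PiM) (rule prob)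
  have spNp: "space (N p) = UNIV" using Np by simp
  define H where "H = {x \<in> space M. h x}"
  define E where "E = {x \<in> space M. h x \<and> G x \<noteq> 0 \<and> \<bar>G x * x p + F x\<bar> \<le> s * \<bar>G x\<bar>}"
  have Hm: "H \<in> sets M" using hm unfolding H_def M_def .
  have [measurable]: "G \<in> borel_measurable M" "F \<in> borel_measurable M" using Gm Fm unfolding M_def by auto
  have [measurable]: "(\<lambda>x. x p) \<in> borel_measurable M"
  proof -
    have "(\<lambda>x. x p) \<in> measurable M (N p)" unfolding M_def by (rule measurable_component_singleton[OF K(2)])
    moreover have "measurable M (N p) = measurable M borel" by (rule measurable_cong_sets) (simp_all add: Np)
    ultimately show ?thesis by simp
  qed
  have E2: "{x \<in> space M. G x \<noteq> 0 \<and> \<bar>G x * x p + F x\<bar> \<le> s * \<bar>G x\<bar>} \<in> sets M"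
  proof -
    have a: "{x\<in>space M. \<bar>G x * x p + F x\<bar> \<le> s * \<bar>G x\<bar>} \<in> sets M"
      by (rule borel_measurable_le) measurable
    have b: "{x\<in>space M. G x \<noteq> (\<lambda>_. 0) x} \<in> sets M"
      by (rule borel_measurable_neq) measurable
    have "{x \<in> space M. G x \<noteq> 0 \<and> \<bar>G x * x p + F x\<bar> \<le> s * \<bar>G x\<bar>} = {x\<in>space M. G x \<noteq> (\<lambda>_. 0) x} \<inter> {x\<in>space M. \<bar>G x * x p + F x\<bar> \<le> s * \<bar>G x\<bar>}"
      by auto
    thus ?thesis using a b by auto
  qed
  have "E = H \<inter> {x \<in> space M. G x \<noteq> 0 \<and> \<bar>G x * x p + F x\<bar> \<le> s * \<bar>G x\<bar>}"
    unfolding E_def H_def by auto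
  hence Em: "E \<in> sets M" using Hm E2 by auto
  have key: "(\<integral>\<^sup>+ y. indicator E (x(p:=y)) \<partial>N p) \<le> ennreal C * (\<integral>\<^sup>+ y. indicator H (x(p:=y)) \<partial>N p)"
    if x: "x \<in> space (PiM K' N)" for x
  proof -
    define x0 where "x0 = x(p := 0)"
    have x0: "x0 \<in> space M" unfolding x0_def M_def KK(1) using x spNp
      by (simp add: space_PiM PiE_fun_upd)
    have x0': "x0 \<in> space (PiM K N)" using x0 unfolding M_def .
    have upd: "x(p:=y) = x0(p:=y)" for y unfolding x0_def by simp
    have sp: "x0(p:=y) \<in> space M" for y using x0 spNp unfolding M_def
      using PiE_fun_upd[of y "\<lambda>i. space (N i)" p x0 K] K(2) by (simp add: space_PiM insert_absorb)
    have indH: "indicator H (x(p:=y)) = (indicator H x0 :: ennreal)" for y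
      unfolding upd H_def using sp x0 hi[of x0 y] unfolding M_def by (auto split: split_indicator)
    have "(\<integral>\<^sup>+ y. indicator H (x(p:=y)) \<partial>N p) = indicator H x0"
      unfolding indH using prob[of p] by (simp add: prob_space.emeasure_space_1)
    moreover have "(\<integral>\<^sup>+ y. indicator E (x(p:=y)) \<partial>N p) \<le> ennreal C * indicator H x0"
    proof (cases "h x0 \<and> G x0 \<noteq> 0")
      case False
      have "indicator E (x(p:=y)) = (0::ennreal)" for y
        using False unfolding upd E_def using Gi[OF x0'] hi[OF x0'] unfolding M_def by (auto split: split_indicator)
      thus ?thesis by simp
    next
      case True
      let ?c = "- F x0 / G x0"
      have ind: "indicator E (x(p:=y)) = (indicator {?c - s .. ?c + s} y :: ennreal)" for y
      proof -
        have "\<bar>G x0 * y + F x0\<bar> \<le> s * \<bar>G x0\<bar> \<longleftrightarrow> \<bar>y - ?c\<bar> \<le> s"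
        proof -
          have "G x0 * y + F x0 = G x0 * (y - ?c)" using True by (simp add: field_simps)
          hence "\<bar>G x0 * y + F x0\<bar> = \<bar>G x0\<bar> * \<bar>y - ?c\<bar>" by (simp add: abs_mult)
          thus ?thesis using True by (simp add: mult.commute)
        qed
        moreover have "\<bar>y - ?c\<bar> \<le> s \<longleftrightarrow> y \<in> {?c - s .. ?c + s}" by auto
        ultimately show ?thesis unfolding upd E_def using True sp[of y] Gi[OF x0'] Fi[OF x0'] hi[OF x0']
          by (auto split: split_indicator simp del: atLeastAtMost_iff)
      qed
      have "(\<integral>\<^sup>+ y. indicator E (x(p:=y)) \<partial>N p) = emeasure (N p) {?c - s .. ?c + s}"
        unfolding ind Np by (subst nn_integral_indicator) auto
      also have "\<dots> \<le> ennreal C" unfolding Np C_def by (rule normal_cball[OF sg s])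
      also have "\<dots> = ennreal C * indicator H x0" using True x0 unfolding H_def by simp
      finally show ?thesis .
    qed
    ultimately show ?thesis by simp
  qed
  have "emeasure M E = (\<integral>\<^sup>+ x. indicator E x \<partial>M)" using Em by simp
  also have "\<dots> = (\<integral>\<^sup>+ x. (\<integral>\<^sup>+ y. indicator E (x(p:=y)) \<partial>N p) \<partial>PiM K' N)"
    unfolding M_def KK(1) using Em unfolding M_def KK(1)
    by (subst product_nn_integral_insert[OF KK(3) KK(2)]) (auto)
  also have "\<dots> \<le> (\<integral>\<^sup>+ x. ennreal C * (\<integral>\<^sup>+ y. indicator H (x(p:=y)) \<partial>N p) \<partial>PiM K' N)"
    by (intro nn_integral_mono key)
  also have "\<dots> = ennreal C * (\<integral>\<^sup>+ x. (\<integral>\<^sup>+ y. indicator H (x(p:=y)) \<partial>N p) \<partial>PiM K' N)"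
    apply (rule nn_integral_cmult)
    apply (rule borel_measurable_nn_integral)
    using Hm unfolding M_def KK(1) by measurable
  also have "(\<integral>\<^sup>+ x. (\<integral>\<^sup>+ y. indicator H (x(p:=y)) \<partial>N p) \<partial>PiM K' N) = (\<integral>\<^sup>+ x. indicator H x \<partial>M)"
    unfolding M_def KK(1) using Hm unfolding M_def KK(1)
    by (subst product_nn_integral_insert[OF KK(3) KK(2)]) (auto)
  also have "\<dots> = emeasure M H" using Hm by simp
  finally have "emeasure M E \<le> ennreal C * emeasure M H" .
  hence "ennreal (measure M E) \<le> ennreal (C * measure M H)"
    by (simp add: Mp.emeasure_eq_measure ennreal_mult C0)
  hence "measure M E \<le> C * measure M H"
    using C0 by (simp add: ennreal_le_iff)
  thus ?thesis unfolding M_def E_def H_def C_def by simp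
qed



lemma mat_delete_replace_col:
  fixes Mx :: "real mat" and v :: "real vec"
  assumes "Mx \<in> carrier_mat d d"
  shows "mat_delete (replace_col Mx v j) k j = mat_delete Mx k j"
  using assms by (intro eq_matI) (auto simp: mat_delete_def replace_col_def)

lemma cramer_exp:
  fixes Mx :: "real mat" and x :: "real vec"
  assumes Mx: "Mx \<in> carrier_mat d d" and x: "x \<in> carrier_vec d" and j: "j < d"
  shows "vec_index x j * Determinant.det Mx = (\<Sum>k<d. vec_index (Mx *\<^sub>v x) k * cofactor Mx k j)"
proof -
  have RC: "replace_col Mx (Mx *\<^sub>v x) j \<in> carrier_mat d d" using Mx by (auto simp: replace_col_def)
  have "vec_index x j * Determinant.det Mx = Determinant.det (replace_col Mx (Mx *\<^sub>v x) j)"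
    using cramer_lemma_mat[OF Mx x j] by simp
  also have "\<dots> = (\<Sum>k<d. replace_col Mx (Mx *\<^sub>v x) j $$ (k,j) * cofactor (replace_col Mx (Mx *\<^sub>v x) j) k j)"
    by (rule laplace_expansion_column[OF RC j])
  also have "\<dots> = (\<Sum>k<d. vec_index (Mx *\<^sub>v x) k * cofactor Mx k j)"
  proof (intro sum.cong refl)
    fix k assume k: "k \<in> {..<d}"
    have "cofactor (replace_col Mx (Mx *\<^sub>v x) j) k j = cofactor Mx k j"
      by (simp add: cofactor_def mat_delete_replace_col[OF Mx])
    moreover have "replace_col Mx (Mx *\<^sub>v x) j $$ (k,j) = vec_index (Mx *\<^sub>v x) k"
      using Mx j k by (simp add: replace_col_def)
    ultimately show "replace_col Mx (Mx *\<^sub>v x) j $$ (k,j) * cofactor (replace_col Mx (Mx *\<^sub>v x) j) k j = vec_index (Mx *\<^sub>v x) k * cofactor Mx k j"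
      by simp
  qed
  finally show ?thesis .
qed

lemma linalg:
  fixes Mx :: "real mat" and x v :: "real vec"
  assumes Mx: "Mx \<in> carrier_mat d d" and x: "x \<in> carrier_vec d" and d: "d \<ge> 1"
    and det0: "Determinant.det Mx \<noteq> 0" and v: "Mx *\<^sub>v x = v" and vb: "\<And>k. k < d \<Longrightarrow> \<bar>vec_index v k\<bar> \<le> m"
    and m: "m > 0" and R: "R > 0" and big: "R * m \<le> vnorm x"
  shows "\<exists>j<d. \<exists>k<d. (\<forall>k'<d. \<bar>cofactor Mx k' j\<bar> \<le> \<bar>cofactor Mx k j\<bar>)
            \<and> (\<forall>k'<k. \<bar>cofactor Mx k' j\<bar> < \<bar>cofactor Mx k j\<bar>)
            \<and> cofactor Mx k j \<noteq> 0 \<and> \<bar>Determinant.det Mx\<bar> \<le> real d ^ 2 / R * \<bar>cofactor Mx k j\<bar>"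
proof -
  let ?c = "\<lambda>k j. \<bar>cofactor Mx k j\<bar>"
  let ?D = "\<bar>Determinant.det Mx\<bar>"
  have row: "\<bar>vec_index x j\<bar> * ?D \<le> m * (\<Sum>k<d. ?c k j)" if j: "j < d" for j
  proof -
    have "\<bar>vec_index x j\<bar> * ?D = \<bar>\<Sum>k<d. vec_index v k * cofactor Mx k j\<bar>"
      using cramer_exp[OF Mx x j] v by (simp add: abs_mult[symmetric])
    also have "\<dots> \<le> (\<Sum>k<d. \<bar>vec_index v k\<bar> * ?c k j)" by (rule order_trans[OF sum_abs]) (simp add: abs_mult)
    also have "\<dots> \<le> (\<Sum>k<d. m * ?c k j)" by (intro sum_mono mult_right_mono vb) auto
    finally show ?thesis by (simp add: sum_distrib_left)
  qed
  have vn: "vnorm x \<le> (\<Sum>j<d. \<bar>vec_index x j\<bar>)"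
    using L2_set_le_sum_abs[of "\<lambda>j. vec_index x j" "{..<d}"] x unfolding vnorm_def L2_set_def by simp
  have "R * m * ?D \<le> (\<Sum>j<d. \<bar>vec_index x j\<bar>) * ?D" using big vn by (intro mult_right_mono) auto
  also have "\<dots> = (\<Sum>j<d. \<bar>vec_index x j\<bar> * ?D)" by (simp add: sum_distrib_right)
  also have "\<dots> \<le> (\<Sum>j<d. m * (\<Sum>k<d. ?c k j))" by (intro sum_mono row) auto
  finally have "m * (R * ?D) \<le> m * (\<Sum>j<d. \<Sum>k<d. ?c k j)" by (simp add: sum_distrib_left mult_ac)
  hence S: "R * ?D \<le> (\<Sum>j<d. \<Sum>k<d. ?c k j)" using m by simp
  have "\<exists>j<d. \<exists>k<d. R * ?D \<le> real d ^ 2 * ?c k j"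
  proof (rule ccontr)
    assume "\<not> ?thesis"
    hence lt: "\<And>j k. j < d \<Longrightarrow> k < d \<Longrightarrow> real d ^ 2 * ?c k j < R * ?D" by force
    have "0 \<in> {..<d}" using d by simp
    hence ne: "{..<d} \<noteq> {}" by blast
    have "real d ^ 2 * (\<Sum>j<d. \<Sum>k<d. ?c k j) = (\<Sum>j<d. \<Sum>k<d. real d ^ 2 * ?c k j)"
      by (simp add: sum_distrib_left)
    also have "\<dots> < (\<Sum>j<d. \<Sum>k<d. R * ?D)"
      by (intro sum_strict_mono ne) (auto intro: lt)
    also have "\<dots> = real d ^ 2 * (R * ?D)" by (simp add: power2_eq_square)
    finally have "(\<Sum>j<d. \<Sum>k<d. ?c k j) < R * ?D" using d by simp
    thus False using S by simp
  qed
  then obtain j0 k0 where jk0: "j0 < d" "k0 < d" "R * ?D \<le> real d ^ 2 * ?c k0 j0" by blast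
  define mx where "mx = Max ((\<lambda>k. ?c k j0) ` {..<d})"
  have fin: "finite ((\<lambda>k. ?c k j0) ` {..<d})" "(\<lambda>k. ?c k j0) ` {..<d} \<noteq> {}" using jk0(1) by auto
  obtain k2 where k2: "k2 < d" "?c k2 j0 = mx" using Max_in[OF fin] unfolding mx_def by auto
  have mxge: "\<And>k. k < d \<Longrightarrow> ?c k j0 \<le> mx" unfolding mx_def using fin by (intro Max_ge) auto
  define P where "P = (\<lambda>k. k < d \<and> (\<forall>k'<d. ?c k' j0 \<le> ?c k j0))"
  have Pk2: "P k2" unfolding P_def using k2 mxge by auto
  define k1 where "k1 = (LEAST k. P k)"
  have Pk1: "P k1" unfolding k1_def by (rule LeastI[of P k2, OF Pk2])
  have first: "\<forall>k'<k1. ?c k' j0 < ?c k1 j0"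
  proof (intro allI impI)
    fix k' assume "k' < k1"
    hence "\<not> P k'" unfolding k1_def by (rule not_less_Least)
    moreover have "k' < d" using \<open>k' < k1\<close> Pk1 unfolding P_def by auto
    ultimately show "?c k' j0 < ?c k1 j0" using Pk1 unfolding P_def by force
  qed
  have "?c k0 j0 \<le> ?c k1 j0" using Pk1 jk0 unfolding P_def by auto
  hence "R * ?D \<le> real d ^ 2 * ?c k1 j0" using jk0 by (meson order_trans mult_left_mono zero_le_power2 of_nat_0_le_iff zero_le_power)
  hence le: "?D \<le> real d ^ 2 / R * ?c k1 j0" using R by (simp add: field_simps)
  have "cofactor Mx k1 j0 \<noteq> 0" using le det0 by auto
  thus ?thesis using Pk1 first le jk0 unfolding P_def by blast
qed



lemma comp_meas:
  assumes "q \<in> K" "sets (N q) = sets borel"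
  shows "(\<lambda>A. A q) \<in> borel_measurable (PiM K N)"
proof -
  have "(\<lambda>x. x q) \<in> measurable (PiM K N) (N q)" by (rule measurable_component_singleton[OF assms(1)])
  moreover have "measurable (PiM K N) (N q) = measurable (PiM K N) borel"
    by (rule measurable_cong_sets) (simp_all add: assms(2))
  ultimately show ?thesis by simp
qed

lemma det_mat_expand:
  "Determinant.det (mat m m g) = (\<Sum>p\<in>{p. p permutes {0..<m}}. signof p * (\<Prod>i=0..<m. g (i, p i)))"
proof -
  have "Determinant.det (mat m m g) = (\<Sum>p\<in>{p. p permutes {0..<m}}. signof p * (\<Prod>i=0..<m. mat m m g $$ (i, p i)))"
    by (rule det_def') simp
  also have "\<dots> = (\<Sum>p\<in>{p. p permutes {0..<m}}. signof p * (\<Prod>i=0..<m. g (i, p i)))"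
  proof (intro sum.cong refl arg_cong2[where f="(*)"] prod.cong)
    fix p i assume "p \<in> {p. p permutes {0..<m}}" "i \<in> {0..<m}"
    hence "p i < m" by (auto dest: permutes_in_image)
    thus "mat m m g $$ (i, p i) = g (i, p i)" using \<open>i \<in> {0..<m}\<close> by simp
  qed
  finally show ?thesis .
qed

lemma det_meas:
  assumes "\<And>a b. a < m \<Longrightarrow> b < m \<Longrightarrow> (\<lambda>A. g A (a,b)) \<in> borel_measurable M"
  shows "(\<lambda>A. Determinant.det (mat m m (g A)) :: real) \<in> borel_measurable M"
proof -
  have "(\<lambda>A. (\<Sum>p\<in>{p. p permutes {0..<m}}. signof p * (\<Prod>i=0..<m. g A (i, p i)))) \<in> borel_measurable M"
  proof (intro borel_measurable_sum borel_measurable_times borel_measurable_prod borel_measurable_const)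
    fix p i assume "p \<in> {p. p permutes {0..<m}}" "i \<in> {0..<m}"
    hence "p i < m" by (auto dest: permutes_in_image)
    thus "(\<lambda>A. g A (i, p i)) \<in> borel_measurable M" using \<open>i \<in> {0..<m}\<close> by (intro assms) auto
  qed
  thus ?thesis by (simp add: det_mat_expand)
qed

lemma sub_rows_index:
  "a < d \<Longrightarrow> b < d \<Longrightarrow> sub_rows d A I $$ (a,b) = A (sorted_list_of_set I ! a, b)"
  by (simp add: sub_rows_def)

lemma sub_rows_carrier: "sub_rows d A I \<in> carrier_mat d d"
  by (simp add: sub_rows_def)

lemma mat_delete_sub_rows:
  "mat_delete (sub_rows d A I) k j = mat (d-1) (d-1) (\<lambda>(a,b). sub_rows d A I $$ (if a < k then a else Suc a, if b < j then b else Suc b))"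
  by (simp add: mat_delete_def sub_rows_def)

context
  fixes n d :: nat and I :: "nat set" and N :: "nat \<times> nat \<Rightarrow> real measure"
  assumes I: "I \<subseteq> {..<n}" "card I = d"
    and Nb: "\<And>q. sets (N q) = sets borel"
begin

lemma L_in: "a < d \<Longrightarrow> sorted_list_of_set I ! a \<in> I"
  using I by (metis finite_lessThan finite_subset length_sorted_list_of_set nth_mem set_sorted_list_of_set)

lemma entry_meas:
  assumes "a < d" "b < d"
  shows "(\<lambda>A. sub_rows d A I $$ (a,b)) \<in> borel_measurable (PiM ({..<n} \<times> {..<d}) N)"
proof -
  have "(sorted_list_of_set I ! a, b) \<in> {..<n} \<times> {..<d}" using L_in[OF assms(1)] I assms by auto
  hence "(\<lambda>A. A (sorted_list_of_set I ! a, b)) \<in> borel_measurable (PiM ({..<n} \<times> {..<d}) N)"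
    by (rule comp_meas) (rule Nb)
  thus ?thesis using assms by (simp add: sub_rows_index)
qed

lemma det_sub_meas:
  "(\<lambda>A. Determinant.det (sub_rows d A I)) \<in> borel_measurable (PiM ({..<n} \<times> {..<d}) N)"
proof -
  have "(\<lambda>A. Determinant.det (mat d d (\<lambda>(a,b). A (sorted_list_of_set I ! a, b))) :: real) \<in> borel_measurable (PiM ({..<n} \<times> {..<d}) N)"
  proof (rule det_meas)
    fix a b assume ab: "a < d" "b < d"
    have "(sorted_list_of_set I ! a, b) \<in> {..<n} \<times> {..<d}" using L_in[OF ab(1)] I ab by auto
    thus "(\<lambda>A. (\<lambda>(a,b). A (sorted_list_of_set I ! a, b)) (a,b)) \<in> borel_measurable (PiM ({..<n} \<times> {..<d}) N)"
      by simp (rule comp_meas, auto simp: Nb)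
  qed
  thus ?thesis by (simp add: sub_rows_def)
qed

lemma cof_meas:
  assumes "j < d"
  shows "(\<lambda>A. cofactor (sub_rows d A I) k j) \<in> borel_measurable (PiM ({..<n} \<times> {..<d}) N)"
proof -
  have "(\<lambda>A. Determinant.det (mat (d-1) (d-1) (\<lambda>(a,b). sub_rows d A I $$ (if a < k then a else Suc a, if b < j then b else Suc b))) :: real) \<in> borel_measurable (PiM ({..<n} \<times> {..<d}) N)"
  proof (rule det_meas)
    fix a b assume ab: "a < d - 1" "b < d - 1"
    show "(\<lambda>A. (\<lambda>(a,b). sub_rows d A I $$ (if a < k then a else Suc a, if b < j then b else Suc b)) (a,b)) \<in> borel_measurable (PiM ({..<n} \<times> {..<d}) N)"
      using ab unfolding prod.case by (intro entry_meas) auto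
  qed
  thus ?thesis unfolding cofactor_def mat_delete_sub_rows by measurable
qed

end

lemma cof_inv:
  assumes "\<And>i l. l \<noteq> j \<Longrightarrow> A (i,l) = A' (i,l)"
  shows "cofactor (sub_rows d A I) k j = cofactor (sub_rows d A' I) k j"
proof -
  have "mat_delete (sub_rows d A I) k j = mat_delete (sub_rows d A' I) k j"
    unfolding mat_delete_sub_rows
    by (intro eq_matI) (auto simp: sub_rows_index assms)
  thus ?thesis by (simp add: cofactor_def)
qed

lemma det_upd:
  assumes I: "finite I" "card I = d" and k: "k < d" and j: "j < d"
  shows "Determinant.det (sub_rows d (A((sorted_list_of_set I ! k, j) := y)) I)
       = Determinant.det (sub_rows d A I) + (y - A (sorted_list_of_set I ! k, j)) * cofactor (sub_rows d A I) k j"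
proof -
  let ?L = "sorted_list_of_set I"
  let ?p = "(?L ! k, j)"
  let ?A' = "A(?p := y)"
  have dist: "distinct ?L" "length ?L = d" using I by auto
  have cof: "cofactor (sub_rows d ?A' I) k' j = cofactor (sub_rows d A I) k' j" for k'
    by (rule cof_inv) auto
  have ent: "sub_rows d ?A' I $$ (k', j) = sub_rows d A I $$ (k', j) + (if k' = k then y - A ?p else 0)"
    if "k' < d" for k'
  proof -
    have "(?L ! k' = ?L ! k) = (k' = k)" using dist that k by (simp add: nth_eq_iff_index_eq)
    thus ?thesis using that j by (auto simp: sub_rows_index)
  qed
  have "Determinant.det (sub_rows d ?A' I) = (\<Sum>k'<d. sub_rows d ?A' I $$ (k',j) * cofactor (sub_rows d ?A' I) k' j)"
    by (rule laplace_expansion_column[OF sub_rows_carrier j])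
  also have "\<dots> = (\<Sum>k'<d. sub_rows d A I $$ (k',j) * cofactor (sub_rows d A I) k' j
                    + (if k' = k then (y - A ?p) * cofactor (sub_rows d A I) k j else 0))"
    by (intro sum.cong refl) (auto simp: ent cof distrib_right)
  also have "\<dots> = Determinant.det (sub_rows d A I) + (y - A ?p) * cofactor (sub_rows d A I) k j"
    using k by (simp add: sum.distrib laplace_expansion_column[OF sub_rows_carrier j])
  finally show ?thesis .
qed



lemma binom_bound: assumes "d \<ge> 1" shows "d * (n choose d) \<le> n ^ d"
proof -
  obtain k where k: "d = Suc k" using assms by (cases d) auto
  have "d * (n choose d) = n * ((n - 1) choose k)" unfolding k by (rule binomial_absorption)
  also have "\<dots> \<le> n * n ^ k"
  proof (cases "k \<le> n - 1")
    case True
    have "(n - 1) choose k \<le> (n - 1) ^ k" by (rule binomial_le_pow[OF True])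
    also have "\<dots> \<le> n ^ k" by (rule power_mono) auto
    finally show ?thesis by simp
  next
    case False
    hence "(n - 1) choose k = 0" using binomial_eq_0[of "n-1" k] by simp
    thus ?thesis by (metis mult_0_right zero_le)
  qed
  finally show ?thesis unfolding k by simp
qed

theorem lemma4p24:
  fixes n d :: nat and mu :: "nat \<Rightarrow> nat \<Rightarrow> real" and sg R :: real
    and b :: "nat \<Rightarrow> real"
  assumes "d \<ge> 1" and "sg > 0" and "R > 0"
    and "\<exists>i<n. b i \<noteq> 0"
  shows "measure (gauss_matrix_measure n d mu sg)
           {A \<in> space (gauss_matrix_measure n d mu sg).
              \<exists>I. I \<subseteq> {..<n} \<and> card I = d \<and>
                  (\<exists>B. mat_inverse (sub_rows d A I) = Some B \<and>
                       vnorm (B *\<^sub>v sub_vec d b I) \<ge> R * sup_norm n b)}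
         \<le> 2 * real d ^ 2 * real n ^ d / (sg * R * sqrt (2 * pi))"
proof -
  note d = assms(1) and sg = assms(2) and R = assms(3)
  define K where "K = {..<n} \<times> {..<d}"
  define N where "N = (\<lambda>(i,j). density lborel (normal_density (mu i j) sg))"
  define M where "M = gauss_matrix_measure n d mu sg"
  have MK: "M = PiM K N" unfolding M_def gauss_matrix_measure_def K_def N_def ..
  have Nb: "\<And>q. sets (N q) = sets borel" unfolding N_def by (auto split: prod.split)
  have Nprob: "\<And>q. prob_space (N q)" unfolding N_def using sg by (auto split: prod.split simp: prob_space_normal_density)
  interpret P: prob_space M unfolding MK by (rule prob_space_PiM) (rule Nprob)
  define m where "m = sup_norm n b"
  obtain i0 where i0: "i0 < n" "b i0 \<noteq> 0" using assms(4) by blast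
  have bm: "\<bar>b i\<bar> \<le> m" if "i < n" for i
    unfolding m_def sup_norm_def using that by (intro Max_ge) auto
  have m0: "m > 0" using bm[OF i0(1)] i0(2) by simp
  define T where "T = real d ^ 2 / R"
  have T0: "T \<ge> 0" unfolding T_def using R by simp
  define C where "C = 2 * T / (sg * sqrt (2*pi))"
  define Is where "Is = {I. I \<subseteq> {..<n} \<and> card I = d}"
  have finIs: "finite Is" unfolding Is_def by auto
  define L where "L I = sorted_list_of_set I" for I :: "nat set"
  define cof where "cof I j k A = cofactor (sub_rows d A I) k j" for I j k A
  define hh where "hh I j k A = ((\<forall>k'<d. \<bar>cof I j k' A\<bar> \<le> \<bar>cof I j k A\<bar>) \<and> (\<forall>k'<k. \<bar>cof I j k' A\<bar> < \<bar>cof I j k A\<bar>))" for I j k A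
  define F where "F I j k A = Determinant.det (sub_rows d A I) - cof I j k A * A (L I ! k, j)" for I j k A
  define H where "H I j k = {A \<in> space M. hh I j k A}" for I j k
  define E where "E I j k = {A \<in> space M. hh I j k A \<and> cof I j k A \<noteq> 0 \<and>
      \<bar>cof I j k A * A (L I ! k, j) + F I j k A\<bar> \<le> T * \<bar>cof I j k A\<bar>}" for I j k
  have Isfin: "finite I" if "I \<in> Is" for I using that unfolding Is_def by (auto intro: finite_subset)
  have Lk: "L I ! k \<in> I" if "I \<in> Is" "k < d" for I k
    using that L_in[of I n d N k] Nb unfolding Is_def L_def by auto
  have cofm[measurable]: "cof I j k' \<in> borel_measurable M" if "I \<in> Is" "j < d" for I j k'
    using that cof_meas[of I n d N j k'] Nb unfolding Is_def cof_def MK K_def by auto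
  have detm[measurable]: "(\<lambda>A. Determinant.det (sub_rows d A I)) \<in> borel_measurable M" if "I \<in> Is" for I
    using that det_sub_meas[of I n d N] Nb unfolding Is_def MK K_def by auto
  have compm[measurable]: "(\<lambda>A. A (L I ! k, j)) \<in> borel_measurable M" if "I \<in> Is" "k < d" "j < d" for I j k
    using that Lk[OF that(1,2)] comp_meas[of "(L I ! k, j)" K N] Nb unfolding Is_def MK K_def by auto
  have Fm: "F I j k \<in> borel_measurable M" if "I \<in> Is" "k < d" "j < d" for I j k
    unfolding F_def using that by measurable
  have Hm: "H I j k \<in> sets M" if "I \<in> Is" "j < d" for I j k
  proof -
    have "H I j k = (\<Inter>k'\<in>{..<d}. {A \<in> space M. \<bar>cof I j k' A\<bar> \<le> \<bar>cof I j k A\<bar>})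
       \<inter> (\<Inter>k'\<in>{..<k}. {A \<in> space M. \<bar>cof I j k' A\<bar> < \<bar>cof I j k A\<bar>}) \<inter> space M"
      unfolding H_def hh_def by auto
    also have "\<dots> \<in> sets M" using that by measurable
    finally show ?thesis .
  qed
  have Em: "E I j k \<in> sets M" if "I \<in> Is" "j < d" "k < d" for I j k
  proof -
    have "E I j k = H I j k \<inter> {A \<in> space M. cof I j k A \<noteq> (\<lambda>_. 0) A}
       \<inter> {A \<in> space M. \<bar>cof I j k A * A (L I ! k, j) + F I j k A\<bar> \<le> T * \<bar>cof I j k A\<bar>}"
      unfolding E_def H_def by auto
    moreover have "{A \<in> space M. cof I j k A \<noteq> (\<lambda>_. 0) A} \<in> sets M"
      using that by (intro borel_measurable_neq) auto
    moreover have "{A \<in> space M. \<bar>cof I j k A * A (L I ! k, j) + F I j k A\<bar> \<le> T * \<bar>cof I j k A\<bar>} \<in> sets M"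
    proof -
      note [measurable] = cofm[OF that(1,2), of k] compm[OF that(1,3,2)] Fm[OF that(1,3,2)]
      show ?thesis by measurable
    qed
    ultimately show ?thesis using Hm[OF that(1,2)] by auto
  qed
  have Ebound: "measure M (E I j k) \<le> C * measure M (H I j k)" if IJK: "I \<in> Is" "j < d" "k < d" for I j k
  proof -
    let ?p = "(L I ! k, j)"
    have pK: "?p \<in> K" using Lk[OF IJK(1,3)] IJK unfolding K_def Is_def by auto
    have Np: "N ?p = density lborel (normal_density (mu (L I ! k) j) sg)" unfolding N_def by simp
    have fin: "finite K" unfolding K_def by auto
    have Gi: "cof I j k (x(?p:=y)) = cof I j k x" for x y k'
      unfolding cof_def by (rule cof_inv) auto
    have Gi': "cof I j k' (x(?p:=y)) = cof I j k' x" for x y k'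
      unfolding cof_def by (rule cof_inv) auto
    have Fi: "F I j k (x(?p:=y)) = F I j k x" for x y
      unfolding F_def L_def using det_upd[OF Isfin[OF IJK(1)] _ IJK(3) IJK(2), of x y] IJK(1) Gi[of x y]
      unfolding Is_def L_def cof_def by (simp add: algebra_simps)
    have hi: "hh I j k (x(?p:=y)) = hh I j k x" for x y
      unfolding hh_def Gi' ..
    have "measure (PiM K N) {x \<in> space (PiM K N). hh I j k x \<and> cof I j k x \<noteq> 0 \<and> \<bar>cof I j k x * x ?p + F I j k x\<bar> \<le> T * \<bar>cof I j k x\<bar>}
        \<le> 2 * T / (sg * sqrt (2*pi)) * measure (PiM K N) {x \<in> space (PiM K N). hh I j k x}"
      apply (rule lemA[where N=N and K=K and p="(L I ! k, j)" and G="cof I j k" and F="F I j k" and h="hh I j k" and s=T and mp = "mu (L I ! k) j" and sg=sg])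
      using fin pK Nprob Np sg T0 Hm[OF IJK(1,2), of k] cofm[OF IJK(1,2), of k] Fm[OF IJK(1,3,2)] Gi Fi hi
      unfolding H_def MK by auto
    thus ?thesis unfolding E_def H_def C_def MK .
  qed
  have Hsum: "(\<Sum>k<d. measure M (H I j k)) \<le> 1" if IJ: "I \<in> Is" "j < d" for I j
  proof -
    have disj: "disjoint_family_on (H I j) {..<d}"
      unfolding disjoint_family_on_def
    proof (intro ballI impI)
      fix k1 k2 assume k: "k1 \<in> {..<d}" "k2 \<in> {..<d}" "k1 \<noteq> k2"
      show "H I j k1 \<inter> H I j k2 = {}"
      proof (rule ccontr)
        assume "H I j k1 \<inter> H I j k2 \<noteq> {}"
        then obtain A where "hh I j k1 A" "hh I j k2 A" unfolding H_def by auto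
        thus False using k unfolding hh_def
          by (metis lessThan_iff linorder_neqE_nat not_less)
      qed
    qed
    have "(\<Sum>k<d. measure M (H I j k)) = measure M (\<Union>k<d. H I j k)"
      using Hm[OF IJ] disj by (intro P.finite_measure_finite_Union[symmetric]) auto
    also have "\<dots> \<le> 1" by (rule P.prob_le_1)
    finally show ?thesis .
  qed
  define S where "S = {A \<in> space M.
              \<exists>I. I \<subseteq> {..<n} \<and> card I = d \<and>
                  (\<exists>B. mat_inverse (sub_rows d A I) = Some B \<and>
                       vnorm (B *\<^sub>v sub_vec d b I) \<ge> R * sup_norm n b)}"
  have incl: "S \<subseteq> (\<Union>I\<in>Is. \<Union>j<d. \<Union>k<d. E I j k)"
  proof
    fix A assume "A \<in> S"
    then obtain I B where AM: "A \<in> space M" and I: "I \<subseteq> {..<n}" "card I = d"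
      and B: "mat_inverse (sub_rows d A I) = Some B" and big: "R * m \<le> vnorm (B *\<^sub>v sub_vec d b I)"
      unfolding S_def m_def by blast
    have IIs: "I \<in> Is" unfolding Is_def using I by auto
    let ?Mx = "sub_rows d A I"
    let ?v = "sub_vec d b I"
    have Mx: "?Mx \<in> carrier_mat d d" by (rule sub_rows_carrier)
    have inv: "?Mx * B = 1\<^sub>m d" "B \<in> carrier_mat d d" using mat_inverse(2)[OF Mx B] by auto
    have v: "?v \<in> carrier_vec d" unfolding sub_vec_def by simp
    have x: "B *\<^sub>v ?v \<in> carrier_vec d" using inv v by simp
    have Mxv: "?Mx *\<^sub>v (B *\<^sub>v ?v) = ?v"
      using inv v Mx by (metis assoc_mult_mat_vec one_mult_mat_vec)
    have "Determinant.det ?Mx * Determinant.det B = 1"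
      using det_mult[OF Mx inv(2)] inv(1) by simp
    hence det0: "Determinant.det ?Mx \<noteq> 0" by auto
    have vb: "\<bar>vec_index ?v k\<bar> \<le> m" if "k < d" for k
      using that bm Lk[OF IIs that] I unfolding sub_vec_def L_def by auto
    obtain j k where jk: "j < d" "k < d"
      "\<forall>k'<d. \<bar>cofactor ?Mx k' j\<bar> \<le> \<bar>cofactor ?Mx k j\<bar>"
      "\<forall>k'<k. \<bar>cofactor ?Mx k' j\<bar> < \<bar>cofactor ?Mx k j\<bar>"
      "cofactor ?Mx k j \<noteq> 0" "\<bar>Determinant.det ?Mx\<bar> \<le> real d ^ 2 / R * \<bar>cofactor ?Mx k j\<bar>"
      using linalg[OF Mx x d det0 Mxv vb m0 R big] by blast
    have "A \<in> E I j k"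
      unfolding E_def hh_def F_def cof_def T_def using AM jk by auto
    thus "A \<in> (\<Union>I\<in>Is. \<Union>j<d. \<Union>k<d. E I j k)" using IIs jk by blast
  qed
  have "measure M S \<le> measure M (\<Union>I\<in>Is. \<Union>j<d. \<Union>k<d. E I j k)"
    using incl Em finIs by (intro P.finite_measure_mono) auto
  also have "\<dots> \<le> (\<Sum>I\<in>Is. measure M (\<Union>j<d. \<Union>k<d. E I j k))"
    using Em finIs by (intro measure_UNION_le) auto
  also have "\<dots> \<le> (\<Sum>I\<in>Is. \<Sum>j<d. measure M (\<Union>k<d. E I j k))"
    using Em by (intro sum_mono measure_UNION_le) auto
  also have "\<dots> \<le> (\<Sum>I\<in>Is. \<Sum>j<d. \<Sum>k<d. measure M (E I j k))"
    using Em by (intro sum_mono measure_UNION_le) auto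
  also have "\<dots> \<le> (\<Sum>I\<in>Is. \<Sum>j<d. \<Sum>k<d. C * measure M (H I j k))"
    using Ebound by (intro sum_mono) auto
  also have "\<dots> \<le> (\<Sum>I\<in>Is. \<Sum>j<d. C)"
  proof (intro sum_mono)
    fix I j assume "I \<in> Is" "j \<in> {..<d}"
    hence "(\<Sum>k<d. measure M (H I j k)) \<le> 1" using Hsum by auto
    moreover have "C \<ge> 0" unfolding C_def using T0 sg by auto
    ultimately show "(\<Sum>k<d. C * measure M (H I j k)) \<le> C"
      by (simp add: sum_distrib_left[symmetric] mult_left_le)
  qed
  also have "\<dots> = real (card Is) * real d * C" by simp
  also have "card Is = n choose d" unfolding Is_def using n_subsets[of "{..<n}" d] by simp
  also have "real (n choose d) * real d * C = real (d * (n choose d)) * (2 * real d ^ 2 / (sg * R * sqrt (2 * pi)))"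
    unfolding C_def T_def by (simp add: field_simps)
  also have "\<dots> \<le> real (n ^ d) * (2 * real d ^ 2 / (sg * R * sqrt (2 * pi)))"
  proof (rule mult_right_mono)
    show "real (d * (n choose d)) \<le> real (n ^ d)" using binom_bound[OF d, of n] by (simp only: of_nat_le_iff)
  qed (use sg R in simp)
  also have "\<dots> = 2 * real d ^ 2 * real n ^ d / (sg * R * sqrt (2 * pi))" by simp
  finally show ?thesis unfolding S_def M_def m_def .
qed

end
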